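(* Let $d'\ge 3$ and let $\alpha,\beta,\gamma,\delta$ be four pairwise distinct elements of $\{0,1,2\}^{d'}$. Then: (i) there exist distinct $v',w'\in\{0,1,2\}^{d'}\setminus\{\alpha,\beta,\gamma,\delta\}$ and indices $i,j\in[d']$ such that $v'_i=\alpha_i$ and $v'_j=\beta_j$; (ii) there exist distinct $v',w'\in\{0,1,2\}^{d'}\setminus\{\alpha,\beta,\gamma,\delta\}$, an index $j\in[d']$, and a $2$-element subset $\mathcal{I}\subseteq[d']$ such that $v'_j=\alpha_j$ and $v'_i=w'_i$ for each $i\in\mathcal{I}$.
   Context: For $u\in\{0,1,2\}^{d'}$, $u_i$ denotes its $i$-th coordinate, and $[d']=\{1,\dots,d'\}$. *)

theory Defs
  imports Main
begin

definition cube :: "nat \<Rightarrow> (nat \<Rightarrow> nat) set" where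
  "cube d = {u. (\<forall>i\<in>{1..d}. u i \<in> {0,1,2}) \<and> (\<forall>i. i \<notin> {1..d} \<longrightarrow> u i = 0)}"

end

theory Submission
  imports Defs
begin

definition mk :: "nat \<Rightarrow> nat \<Rightarrow> nat \<Rightarrow> nat \<Rightarrow> nat" where
  "mk a b c = (\<lambda>i. if i = 1 then a else if i = 2 then b else if i = 3 then c else 0)"

lemma mk_cube: "d \<ge> 3 \<Longrightarrow> a \<le> 2 \<Longrightarrow> b \<le> 2 \<Longrightarrow> c \<le> 2 \<Longrightarrow> mk a b c \<in> cube d"
  unfolding cube_def mk_def by auto

lemma mk_proj: "mk a b c 1 = a" "mk a b c 2 = b" "mk a b c 3 = c"
  unfolding mk_def by auto

lemma avoid: "finite T \<Longrightarrow> finite Q \<Longrightarrow> card Q < card T \<Longrightarrow> \<exists>t\<in>T. t \<notin> Q"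
  by (meson card_mono not_le subsetI)

lemma card4: "card (f ` {a,b,c,e::'a}) \<le> 4"
proof -
  have "card {a,b,c,e} \<le> 4" by (simp add: card_insert_if)
  then show ?thesis by (meson card_image_le finite.emptyI finite.insertI order_trans)
qed

theorem claim4p2:
  fixes d :: nat and \<alpha> \<beta> \<gamma> \<delta> :: "nat \<Rightarrow> nat"
  assumes "d \<ge> 3"
    and "\<alpha> \<in> cube d" "\<beta> \<in> cube d" "\<gamma> \<in> cube d" "\<delta> \<in> cube d"
    and "\<alpha> \<noteq> \<beta>" "\<alpha> \<noteq> \<gamma>" "\<alpha> \<noteq> \<delta>" "\<beta> \<noteq> \<gamma>" "\<beta> \<noteq> \<delta>" "\<gamma> \<noteq> \<delta>"
  shows "(\<exists>v w. v \<in> cube d - {\<alpha>, \<beta>, \<gamma>, \<delta>} \<and> w \<in> cube d - {\<alpha>, \<beta>, \<gamma>, \<delta>} \<and> v \<noteq> w \<and>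
            (\<exists>i\<in>{1..d}. \<exists>j\<in>{1..d}. v i = \<alpha> i \<and> v j = \<beta> j))
       \<and> (\<exists>v w. v \<in> cube d - {\<alpha>, \<beta>, \<gamma>, \<delta>} \<and> w \<in> cube d - {\<alpha>, \<beta>, \<gamma>, \<delta>} \<and> v \<noteq> w \<and>
            (\<exists>j\<in>{1..d}. \<exists>I. I \<subseteq> {1..d} \<and> card I = 2 \<and> v j = \<alpha> j \<and> (\<forall>i\<in>I. v i = w i)))"
proof -
  let ?E = "{\<alpha>, \<beta>, \<gamma>, \<delta>}"
  let ?p = "\<lambda>u::nat\<Rightarrow>nat. (u 1, u 2, u 3)"
  let ?q = "\<lambda>u::nat\<Rightarrow>nat. (u 2, u 3)"
  have d1: "1 \<in> {1..d}" "2 \<in> {1..d}" "3 \<in> {1..d}" using assms(1) by auto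
  have c: "u i \<le> 2" if "u \<in> cube d" "i \<in> {1..d}" for u i
    using that unfolding cube_def by force
  have a1: "\<alpha> 1 \<le> 2" and b2: "\<beta> 2 \<le> 2" and b3: "\<beta> 3 \<le> 2"
    using c[OF assms(2) d1(1)] c[OF assms(3) d1(2)] c[OF assms(3) d1(3)] by auto
  have mkE: "mk a b c \<notin> ?E" if "(a,b,c) \<notin> ?p ` ?E" for a b c
  proof
    assume "mk a b c \<in> ?E"
    then have "?p (mk a b c) \<in> ?p ` ?E" by (rule imageI)
    then show False using that by (simp add: mk_def)
  qed
  have mkE2: "mk a b c \<notin> ?E" if "(b,c) \<notin> ?q ` ?E" for a b c
  proof
    assume "mk a b c \<in> ?E"
    then have "?q (mk a b c) \<in> ?q ` ?E" by (rule imageI)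
    then show False using that by (simp add: mk_def)
  qed
  have Q1: "card (?p ` ?E) \<le> 4" by (rule card4)
  have Q2: "card (?q ` ?E) \<le> 4" by (rule card4)
  define S where "S = {0,1,2::nat} \<times> {0,1,2::nat} \<times> {0,1,2::nat}"
  have cS: "card S = 27" unfolding S_def by simp
  have fS: "finite S" unfolding S_def by simp
  define T1 where "T1 = {\<alpha> 1} \<times> ({\<beta> 2} \<times> {0,1,2::nat} \<union> {0,1,2::nat} \<times> {\<beta> 3})"
  have cT1: "card T1 = 5"
  proof -
    let ?A = "{\<beta> 2} \<times> {0,1,2::nat}" and ?B = "{0,1,2::nat} \<times> {\<beta> 3}"
    have i: "?A \<inter> ?B = {(\<beta> 2, \<beta> 3)}" using b2 b3 by auto
    have "card ?A + card ?B = card (?A \<union> ?B) + card (?A \<inter> ?B)"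
      by (rule card_Un_Int) auto
    moreover have "card ?A = 3" "card ?B = 3" by (simp_all add: card_cartesian_product)
    ultimately have "card (?A \<union> ?B) = 5" using i by simp
    then show ?thesis unfolding T1_def card_cartesian_product by simp
  qed
  obtain t where t: "t \<in> T1" "t \<notin> ?p ` ?E"
  proof -
    have "finite T1" unfolding T1_def by simp
    moreover have "finite (?p ` ?E)" by simp
    ultimately show ?thesis using avoid[of T1 "?p ` ?E"] cT1 Q1 that by force
  qed
  obtain a b cc where tabc: "t = (a,b,cc)" by (cases t) auto
  have tb: "a = \<alpha> 1" "b \<le> 2" "cc \<le> 2" "b = \<beta> 2 \<or> cc = \<beta> 3"
    using t(1) b2 b3 unfolding T1_def tabc by auto
  have "card (insert t (?p ` ?E)) \<le> 5" using Q1
    by (simp add: card_insert_if)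
  then obtain s where s: "s \<in> S" "s \<notin> insert t (?p ` ?E)"
    using avoid[OF fS, of "insert t (?p ` ?E)"] cS by force
  obtain a' b' c' where sabc: "s = (a',b',c')" by (cases s) auto
  have sb: "a' \<le> 2" "b' \<le> 2" "c' \<le> 2" using s(1) unfolding S_def sabc by auto
  have P1: "\<exists>v w. v \<in> cube d - ?E \<and> w \<in> cube d - ?E \<and> v \<noteq> w \<and>
            (\<exists>i\<in>{1..d}. \<exists>j\<in>{1..d}. v i = \<alpha> i \<and> v j = \<beta> j)"
  proof (intro exI conjI)
    show "mk a b cc \<in> cube d - ?E" using mk_cube[OF assms(1)] tb a1 mkE t(2) tabc by auto
    show "mk a' b' c' \<in> cube d - ?E" using mk_cube[OF assms(1)] sb mkE s(2) sabc by auto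
    show "mk a b cc \<noteq> mk a' b' c'" 
    proof
      assume "mk a b cc = mk a' b' c'"
      then have "t = s" unfolding sabc tabc by (metis mk_proj)
      then show False using s(2) by simp
    qed
    show "\<exists>i\<in>{1..d}. \<exists>j\<in>{1..d}. mk a b cc i = \<alpha> i \<and> mk a b cc j = \<beta> j"
      using tb d1 mk_proj by metis
  qed
  have cT2: "card ({0,1,2::nat} \<times> {0,1,2::nat}) = 9" by simp
  obtain r where r: "r \<in> {0,1,2::nat} \<times> {0,1,2::nat}" "r \<notin> ?q ` ?E"
    using avoid[of "{0,1,2::nat} \<times> {0,1,2::nat}" "?q ` ?E"] cT2 Q2 by force
  obtain b c where rbc: "r = (b,c)" by (cases r) auto
  have rb: "b \<le> 2" "c \<le> 2" using r(1) rbc by auto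
  have P2: "\<exists>v w. v \<in> cube d - ?E \<and> w \<in> cube d - ?E \<and> v \<noteq> w \<and>
            (\<exists>j\<in>{1..d}. \<exists>I. I \<subseteq> {1..d} \<and> card I = 2 \<and> v j = \<alpha> j \<and> (\<forall>i\<in>I. v i = w i))"
  proof (intro exI conjI)
    show "mk (\<alpha> 1) b c \<in> cube d - ?E" using mk_cube[OF assms(1)] rb a1 mkE2 r(2) rbc by auto
    show "mk ((\<alpha> 1 + 1) mod 3) b c \<in> cube d - ?E" using mk_cube[OF assms(1)] rb mkE2 r(2) rbc by auto
    have "(\<alpha> 1 + 1) mod 3 \<noteq> \<alpha> 1" using a1 by presburger
    then show "mk (\<alpha> 1) b c \<noteq> mk ((\<alpha> 1 + 1) mod 3) b c" by (metis mk_proj(1))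
    show "\<exists>j\<in>{1..d}. \<exists>I. I \<subseteq> {1..d} \<and> card I = 2 \<and> mk (\<alpha> 1) b c j = \<alpha> j \<and>
        (\<forall>i\<in>I. mk (\<alpha> 1) b c i = mk ((\<alpha> 1 + 1) mod 3) b c i)"
      by (rule bexI[of _ 1], rule exI[of _ "{2,3}"]) (use d1 in \<open>auto simp: mk_def\<close>)
  qed
  show ?thesis using P1 P2 by blast
qed

end
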